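(* Let $O_{(4,1)}(x,y,z,w)=x^4z^2w^2+y^4x^2w^2+z^4x^2y^2+w^4y^2z^2-4x^2y^2z^2w^2$, let $0\le a\le1$ and $\alpha,\beta\in\mathbb R$. If $F_1=a\,O_{(4,1)}+xyzw(\alpha x^2z^2+\beta y^2w^2)$ is positive semidefinite on $\mathbb R^4$, then $\alpha=\beta=0$. *)

theory Defs
  imports Complex_Main
begin

definition O41 :: "real \<Rightarrow> real \<Rightarrow> real \<Rightarrow> real \<Rightarrow> real" where
  "O41 x y z w = x^4*z^2*w^2 + y^4*x^2*w^2 + z^4*x^2*y^2 + w^4*y^2*z^2 - 4*x^2*y^2*z^2*w^2"

end

theory Submission
  imports Defs
begin

lemma key: "a * O41 (1+t) 1 1 s + (1+t)*1*1*s*(\<alpha>*(1+t)^2*1^2 + (-\<alpha>)*1^2*s^2)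
   = (2*t+t^2)*(a*(2*t+t^2) + s*\<alpha>*(1+t))" if "s^2 = 1" for a t s \<alpha> :: real
proof -
  have s4: "s^4 = 1" using that by (metis power2_eq_square power_mult numeral_Bit0 mult_2 one_power2 power_add)
  show ?thesis using that s4 unfolding O41_def by (simp add: algebra_simps power2_eq_square power3_eq_cube power4_eq_xxxx) 
qed

theorem lemma4:
  fixes a \<alpha> \<beta> :: real
  assumes "0 \<le> a" and "a \<le> 1"
    and "\<forall>x y z w :: real. 0 \<le> a * O41 x y z w + x*y*z*w*(\<alpha>*x^2*z^2 + \<beta>*y^2*w^2)"
  shows "\<alpha> = 0 \<and> \<beta> = 0"
proof -
  have "0 \<le> a * O41 1 1 1 1 + 1*1*1*1*(\<alpha>*1^2*1^2 + \<beta>*1^2*1^2)" using assms(3) by blast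
  moreover have "0 \<le> a * O41 1 1 1 (-1) + 1*1*1*(-1)*(\<alpha>*1^2*1^2 + \<beta>*1^2*(-1)^2)" using assms(3) by blast
  ultimately have b: "\<beta> = -\<alpha>" unfolding O41_def by simp
  have "\<alpha> = 0"
  proof (rule ccontr)
    assume an: "\<alpha> \<noteq> 0"
    define t where "t = min 1 (\<bar>\<alpha>\<bar>/4)"
    define s where "s = (if \<alpha> > 0 then -1 else (1::real))"
    have t0: "0 < t" "t \<le> 1" "3*t < \<bar>\<alpha>\<bar>" using an unfolding t_def by auto
    have s2: "s^2 = 1" unfolding s_def by simp
    have sa: "s*\<alpha> = -\<bar>\<alpha>\<bar>" unfolding s_def by auto
    have "0 \<le> a * O41 (1+t) 1 1 s + (1+t)*1*1*s*(\<alpha>*(1+t)^2*1^2 + \<beta>*1^2*s^2)" using assms(3) by blast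
    hence h: "0 \<le> (2*t+t^2)*(a*(2*t+t^2) + s*\<alpha>*(1+t))" using key[OF s2, of a t \<alpha>] b by simp
    have p: "0 < 2*t+t^2" using t0 by (simp add: add_pos_nonneg)
    have "a*(2*t+t^2) \<le> 3*t"
    proof -
      have "2*t+t^2 \<le> 3*t" using t0 by (simp add: power2_eq_square)
      moreover have "a*(2*t+t^2) \<le> 2*t+t^2" using assms(2) p by (simp add: mult_left_le_one_le)
      ultimately show ?thesis by linarith
    qed
    moreover have "\<bar>\<alpha>\<bar> \<le> \<bar>\<alpha>\<bar>*(1+t)" using t0 by (simp add: algebra_simps)
    ultimately have "a*(2*t+t^2) + s*\<alpha>*(1+t) < 0" using sa t0 by (simp add: algebra_simps) (smt (verit) abs_ge_zero mult_nonneg_nonneg)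
    with p h show False by (simp add: mult_less_0_iff zero_le_mult_iff)
  qed
  with b show ?thesis by simp
qed

end
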